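(* Consider the partial-block protocol described in the context, on a finite set of agents $A$ with a connected undirected connectivity graph $G=(A,E)$, and suppose the block length is $L=|A|$. Then a deadlock never occurs: for every epoch $t$ it is not the case that $D(i)$ holds for all $i\in A$.
   Context: Let $A$ be a finite set of agents (agent IDs) and $G=(A,E)$ a connected undirected graph; $\Gamma_i$ denotes the set of neighbors of $i$. Fix an integer $L\ge 1$ (block length). Each agent $i$ maintains a partial block $pb_i\subseteq A$ (a set of agent IDs). The system runs in epochs $t=0,1,2,\dots$; $pb_i^{(t)}$ is agent $i$'s partial block at the start of epoch $t$. In each epoch: (C1) every agent $i$ with $i\notin pb_i$ adds $i$ to $pb_i$; (C2) every agent $i$ sends its $pb_i$ to every neighbor $j\in\Gamma_i$. When an agent $i$ receives a partial block $P$ (from a neighbor or via a direct message) it applies the rule: (R1) if $|P\setminus\{i\}|>|pb_i\setminus\{i\}|$, agent $i$ sets $pb_i:=P$; (R2) otherwise, if $|P\setminus\{i\}|=|pb_i\setminus\{i\}|$ and $P\neq pb_i$, agent $i$ sends its current $pb_i$ directly to every agent in $P\setminus pb_i$, each of which processes it by the same rule; (R3) otherwise the received block is discarded. All received partial blocks are assumed to pass all validity and similarity checks. For an agent $i$ and epoch $t$, the predicate $D(i)$ means: $pb_i^{(t)}=pb_i^{(t+1)}$ and $|pb_i^{(t)}|<L$. A deadlock at epoch $t$ means that $D(i)$ holds for all $i\in A$. *)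

theory Defs
  imports Main "HOL-Library.Multiset"
begin

definition neighbors :: "'a set \<Rightarrow> ('a \<Rightarrow> 'a \<Rightarrow> bool) \<Rightarrow> 'a \<Rightarrow> 'a set" where
  "neighbors A E i = {j \<in> A. E i j}"

definition connected_graph :: "'a set \<Rightarrow> ('a \<Rightarrow> 'a \<Rightarrow> bool) \<Rightarrow> bool" where
  "connected_graph A E \<longleftrightarrow>
     finite A \<and> A \<noteq> {} \<and>
     (\<forall>i j. E i j \<longrightarrow> i \<in> A \<and> j \<in> A \<and> E j i \<and> i \<noteq> j) \<and>
     (\<forall>i\<in>A. \<forall>j\<in>A. E\<^sup>*\<^sup>* i j)"

(* A configuration: partial block pb i of every agent, together with the
   multiset of pending messages (recipient, partial block). *)
type_synonym 'a config = "('a \<Rightarrow> 'a set) \<times> ('a \<times> 'a set) multiset"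

definition receive :: "'a \<Rightarrow> 'a set \<Rightarrow> 'a config \<Rightarrow> 'a config" where
  "receive j P c =
     (let pb = fst c; M = snd c - {#(j, P)#} in
      if card (P - {j}) > card (pb j - {j}) then (pb(j := P), M)                        \<comment> \<open>R1\<close>
      else if card (P - {j}) = card (pb j - {j}) \<and> P \<noteq> pb j
        then (pb, M + image_mset (\<lambda>k. (k, pb j)) (mset_set (P - pb j)))               \<comment> \<open>R2\<close>
      else (pb, M))"                                                                  \<comment> \<open>R3\<close>

definition deliver :: "'a config \<Rightarrow> 'a config \<Rightarrow> bool" where
  "deliver c c' \<longleftrightarrow> (\<exists>j P. (j, P) \<in># snd c \<and> c' = receive j P c)"

definition add_self :: "'a set \<Rightarrow> ('a \<Rightarrow> 'a set) \<Rightarrow> ('a \<Rightarrow> 'a set)" where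
  "add_self A pb = (\<lambda>i. if i \<in> A then insert i (pb i) else pb i)"

definition initial_msgs :: "'a set \<Rightarrow> ('a \<Rightarrow> 'a \<Rightarrow> bool) \<Rightarrow> ('a \<Rightarrow> 'a set) \<Rightarrow> ('a \<times> 'a set) multiset" where
  "initial_msgs A E pb =
     image_mset (\<lambda>(i, j). (j, pb i)) (mset_set {(i, j). i \<in> A \<and> j \<in> neighbors A E i})"

(* one epoch: C1, then C2, then all messages (including direct R2 messages)
   are processed in some arbitrary order until none is pending. *)
definition epoch :: "'a set \<Rightarrow> ('a \<Rightarrow> 'a \<Rightarrow> bool) \<Rightarrow> ('a \<Rightarrow> 'a set) \<Rightarrow> ('a \<Rightarrow> 'a set) \<Rightarrow> bool" where
  "epoch A E pb pb' \<longleftrightarrow>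
     (let pb1 = add_self A pb in deliver\<^sup>*\<^sup>* (pb1, initial_msgs A E pb1) (pb', {#}))"

(* an execution: pbs t = partial blocks at the start of epoch t; initially empty *)
definition execution :: "'a set \<Rightarrow> ('a \<Rightarrow> 'a \<Rightarrow> bool) \<Rightarrow> (nat \<Rightarrow> 'a \<Rightarrow> 'a set) \<Rightarrow> bool" where
  "execution A E pbs \<longleftrightarrow> pbs 0 = (\<lambda>_. {}) \<and> (\<forall>t. epoch A E (pbs t) (pbs (Suc t)))"

definition D :: "nat \<Rightarrow> (nat \<Rightarrow> 'a \<Rightarrow> 'a set) \<Rightarrow> nat \<Rightarrow> 'a \<Rightarrow> bool" where
  "D L pbs t i \<longleftrightarrow> pbs t i = pbs (Suc t) i \<and> card (pbs t i) < L"

definition deadlock :: "'a set \<Rightarrow> nat \<Rightarrow> (nat \<Rightarrow> 'a \<Rightarrow> 'a set) \<Rightarrow> nat \<Rightarrow> bool" where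
  "deadlock A L pbs t \<longleftrightarrow> (\<forall>i\<in>A. D L pbs t i)"

end

theory Submission
  imports Defs
begin

definition inv :: "'a set \<Rightarrow> 'a config \<Rightarrow> bool" where
  "inv A c \<longleftrightarrow> (\<forall>x. fst c x \<subseteq> A) \<and> (\<forall>m \<in># snd c. fst m \<in> A \<and> snd m \<subseteq> A)"

lemma diff_mem: "m \<in># M \<Longrightarrow> m \<noteq> a \<Longrightarrow> m \<in># M - {#a#}"
  by (simp add: in_diff_count)

lemma receive_snd: "m \<in># snd c - {#(j,P)#} \<Longrightarrow> m \<in># snd (receive j P c)"
  unfolding receive_def Let_def by auto

lemma receive_inv:
  assumes "finite A" "inv A c" "(j,P) \<in># snd c"
  shows "inv A (receive j P c)"
proof -
  have P: "P \<subseteq> A" "j \<in> A" using assms unfolding inv_def by fastforce+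
  have M: "\<forall>m \<in># snd c - {#(j,P)#}. fst m \<in> A \<and> snd m \<subseteq> A"
    using assms unfolding inv_def by (meson in_diffD)
  have F: "\<forall>x. fst c x \<subseteq> A" using assms unfolding inv_def by blast
  have Fj: "fst c j \<subseteq> A" using F by blast
  have fin: "finite (P - fst c j)" using P assms(1) by (meson finite_Diff finite_subset) 
  show ?thesis
  proof (cases "card (P - {j}) > card (fst c j - {j})")
    case True
    then have "receive j P c = ((fst c)(j := P), snd c - {#(j,P)#})" unfolding receive_def Let_def by simp
    then show ?thesis using P M F unfolding inv_def by auto
  next
    case F1: False
    show ?thesis
    proof (cases "card (P - {j}) = card (fst c j - {j}) \<and> P \<noteq> fst c j")
      case True
      then have "receive j P c = (fst c, snd c - {#(j,P)#} + image_mset (\<lambda>k. (k, fst c j)) (mset_set (P - fst c j)))"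
        using F1 unfolding receive_def Let_def by simp
      moreover have "\<forall>m \<in># image_mset (\<lambda>k. (k, fst c j)) (mset_set (P - fst c j)). fst m \<in> A \<and> snd m \<subseteq> A"
        using fin P Fj by auto
      ultimately show ?thesis using M F unfolding inv_def by (metis fst_conv snd_conv union_iff)
    next
      case False
      then have "receive j P c = (fst c, snd c - {#(j,P)#})" using F1 unfolding receive_def Let_def by auto
      then show ?thesis using P M F unfolding inv_def by auto
    qed
  qed
qed

lemma deliver_inv: "deliver\<^sup>*\<^sup>* c c' \<Longrightarrow> finite A \<Longrightarrow> inv A c \<Longrightarrow> inv A c'"
proof (induction rule: rtranclp_induct)
  case base then show ?case by simp
next
  case (step y z)
  then obtain j P where "(j,P) \<in># snd y" "z = receive j P y" unfolding deliver_def by blast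
  then show ?case using receive_inv step by metis
qed

lemma init_inv:
  assumes "finite A" "\<forall>x. pb x \<subseteq> A"
  shows "inv A (add_self A pb, initial_msgs A E (add_self A pb))"
proof -
  have fin: "finite {(i, j). i \<in> A \<and> j \<in> neighbors A E i}"
    by (rule finite_subset[of _ "A \<times> A"]) (auto simp: neighbors_def assms(1))
  have a: "\<forall>x. add_self A pb x \<subseteq> A" using assms(2) by (auto simp: add_self_def)
  have "\<forall>m \<in># initial_msgs A E (add_self A pb). fst m \<in> A \<and> snd m \<subseteq> A"
  proof
    fix m assume "m \<in># initial_msgs A E (add_self A pb)"
    then obtain i j where "(i,j) \<in> {(i, j). i \<in> A \<and> j \<in> neighbors A E i}" "m = (j, add_self A pb i)"
      unfolding initial_msgs_def using fin by auto
    then show "fst m \<in> A \<and> snd m \<subseteq> A" using a by (auto simp: neighbors_def)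
  qed
  then show ?thesis unfolding inv_def using a by simp
qed

lemma pbs_sub:
  assumes "finite A" "execution A E pbs"
  shows "pbs t x \<subseteq> A"
proof (induction t arbitrary: x)
  case 0 then show ?case using assms by (simp add: execution_def)
next
  case (Suc t)
  have "epoch A E (pbs t) (pbs (Suc t))" using assms by (simp add: execution_def)
  then have "deliver\<^sup>*\<^sup>* (add_self A (pbs t), initial_msgs A E (add_self A (pbs t))) (pbs (Suc t), {#})"
    by (simp add: epoch_def Let_def)
  moreover have "inv A (add_self A (pbs t), initial_msgs A E (add_self A (pbs t)))"
    using init_inv[OF assms(1)] Suc by blast
  ultimately have "inv A (pbs (Suc t), {#})" using deliver_inv assms(1) by blast
  then show ?case by (simp add: inv_def)
qed

lemma mu_step:
  assumes "deliver c c'"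
  shows "card (fst c x - {x}) \<le> card (fst c' x - {x}) \<and>
    (fst c' x \<noteq> fst c x \<longrightarrow> card (fst c x - {x}) < card (fst c' x - {x}))"
proof -
  obtain j P where c': "c' = receive j P c" using assms unfolding deliver_def by blast
  show ?thesis
  proof (cases "card (P - {j}) > card (fst c j - {j})")
    case True
    then have "fst c' = (fst c)(j := P)" unfolding c' receive_def Let_def by simp
    then show ?thesis using True by (cases "x = j") auto
  next
    case False
    then have "fst c' = fst c" unfolding c' receive_def Let_def by simp
    then show ?thesis by simp
  qed
qed

lemma mu_steps:
  assumes "deliver\<^sup>*\<^sup>* c c'"
  shows "card (fst c x - {x}) \<le> card (fst c' x - {x}) \<and>
    (fst c' x \<noteq> fst c x \<longrightarrow> card (fst c x - {x}) < card (fst c' x - {x}))"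
  using assms
proof (induction rule: rtranclp_induct)
  case base then show ?case by simp
next
  case (step y z)
  note h1 = step(3) and h2 = mu_step[OF step(2), of x]
  show ?case
  proof (intro conjI impI)
    show "card (fst c x - {x}) \<le> card (fst z x - {x})" using h1 h2 by (meson le_trans)
  next
    assume ne: "fst z x \<noteq> fst c x"
    show "card (fst c x - {x}) < card (fst z x - {x})"
    proof (cases "fst y x = fst c x")
      case True
      then have "fst z x \<noteq> fst y x" using ne by simp
      then show ?thesis using h2 True by simp
    next
      case False
      then show ?thesis using h1 h2 by (meson less_le_trans)
    qed
  qed
qed

lemma deliver_msg:
  assumes "deliver\<^sup>*\<^sup>* c c'" "snd c' = {#}" "m \<in># snd c"
  shows "\<exists>c1. deliver\<^sup>*\<^sup>* c c1 \<and> m \<in># snd c1 \<and> deliver\<^sup>*\<^sup>* (receive (fst m) (snd m) c1) c'"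
  using assms
proof (induction arbitrary: m rule: converse_rtranclp_induct)
  case base then show ?case by simp
next
  case (step y z)
  from step(1) obtain j P where jP: "(j,P) \<in># snd y" "z = receive j P y" unfolding deliver_def by blast
  show ?case
  proof (cases "m = (j,P)")
    case True
    have "deliver\<^sup>*\<^sup>* y y" by simp
    then show ?thesis using jP step True by (intro exI[of _ y]) auto
  next
    case False
    then have "m \<in># snd z" using jP step(5) diff_mem receive_snd by metis
    from step(3)[OF step(4) this] obtain c1 where
      "deliver\<^sup>*\<^sup>* z c1 \<and> m \<in># snd c1 \<and> deliver\<^sup>*\<^sup>* (receive (fst m) (snd m) c1) c'" by blast
    then show ?thesis using step(1) by (meson converse_rtranclp_into_rtranclp)
  qed
qed


theorem theorem1:
  fixes A :: "'a set" and E :: "'a \<Rightarrow> 'a \<Rightarrow> bool" and pbs :: "nat \<Rightarrow> 'a \<Rightarrow> 'a set"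
  assumes "connected_graph A E"
    and "L = card A"
    and "execution A E pbs"
  shows "\<not> deadlock A L pbs t"
proof
  assume dl: "deadlock A L pbs t"
  have finA: "finite A" and Ane: "A \<noteq> {}"
    and Es: "\<And>i j. E i j \<Longrightarrow> i \<in> A \<and> j \<in> A \<and> E j i \<and> i \<noteq> j"
    and conn: "\<And>i j. i \<in> A \<Longrightarrow> j \<in> A \<Longrightarrow> E\<^sup>*\<^sup>* i j"
    using assms(1) unfolding connected_graph_def by blast+
  define S where "S = pbs t"
  define pb1 where "pb1 = add_self A S"
  define c0 where "c0 = (pb1, initial_msgs A E pb1)"
  define cf where "cf = (pbs (Suc t), ({#} :: ('a \<times> 'a set) multiset))"
  have "epoch A E (pbs t) (pbs (Suc t))" using assms(3) by (simp add: execution_def)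
  then have run: "deliver\<^sup>*\<^sup>* c0 cf"
    unfolding c0_def cf_def pb1_def S_def by (simp add: epoch_def Let_def)
  have Ssub: "\<And>x. S x \<subseteq> A" unfolding S_def using pbs_sub[OF finA assms(3)] by blast
  have DL: "\<And>x. x \<in> A \<Longrightarrow> pbs (Suc t) x = S x \<and> card (S x) < card A"
    using dl assms(2) unfolding deadlock_def D_def S_def by blast
  have inv0: "inv A c0" unfolding c0_def pb1_def using init_inv[OF finA] Ssub by blast
  define Mid where "Mid c \<longleftrightarrow> deliver\<^sup>*\<^sup>* c0 c \<and> deliver\<^sup>*\<^sup>* c cf" for c
  have pb1x: "\<And>x. x \<in> A \<Longrightarrow> pb1 x = insert x (S x)" unfolding pb1_def add_self_def by simp
  have claim1: "fst c x = S x \<and> x \<in> S x" if mc: "Mid c" and xA: "x \<in> A" for c x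
  proof -
    have a: "card (fst c0 x - {x}) \<le> card (fst c x - {x}) \<and>
      (fst c x \<noteq> fst c0 x \<longrightarrow> card (fst c0 x - {x}) < card (fst c x - {x}))"
      using mu_steps[of c0 c x] mc unfolding Mid_def by blast
    have b: "card (fst c x - {x}) \<le> card (fst cf x - {x})"
      using mu_steps[of c cf x] mc unfolding Mid_def by blast
    have e: "fst cf x \<noteq> fst c0 x \<longrightarrow> card (fst c0 x - {x}) < card (fst cf x - {x})"
      using mu_steps[OF run, of x] by blast
    have f0: "fst c0 x = insert x (S x)" using pb1x xA unfolding c0_def by simp
    have ff: "fst cf x = S x" using DL xA unfolding cf_def by simp
    have eq: "card (fst c0 x - {x}) = card (fst cf x - {x})" using f0 ff by simp
    have "fst cf x = fst c0 x" using e eq by linarith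
    then have xS: "x \<in> S x" using f0 ff by auto
    have "fst c x = fst c0 x" using a b eq by linarith
    then show ?thesis using xS f0 by auto
  qed
  have claim2: "\<not> card (S j - {j}) < card (P - {j}) \<and>
     (card (P - {j}) = card (S j - {j}) \<and> P \<noteq> S j \<longrightarrow> (\<forall>k \<in> P - S j. \<exists>c'. Mid c' \<and> (k, S j) \<in># snd c'))"
    if mc: "Mid c" and m: "(j,P) \<in># snd c" for c j P
  proof -
    have cf0: "snd cf = {#}" unfolding cf_def by simp
    obtain c1 where c1: "deliver\<^sup>*\<^sup>* c c1" "(j,P) \<in># snd c1" "deliver\<^sup>*\<^sup>* (receive j P c1) cf"
      using deliver_msg[of c cf "(j,P)"] mc m cf0 unfolding Mid_def by auto
    have c01: "deliver\<^sup>*\<^sup>* c0 c1" using mc c1(1) unfolding Mid_def by auto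
    have dl1: "deliver c1 (receive j P c1)" unfolding deliver_def using c1(2) by blast
    have Mid1: "Mid c1" using c01 dl1 c1(3) unfolding Mid_def by auto
    have Mid2: "Mid (receive j P c1)" using c01 dl1 c1(3) unfolding Mid_def by auto
    have inv1: "inv A c1" using deliver_inv[OF c01 finA inv0] .
    have jA: "j \<in> A" and PA: "P \<subseteq> A" using inv1 c1(2) unfolding inv_def by fastforce+
    have f1: "fst c1 j = S j" using claim1[OF Mid1 jA] by simp
    have f2: "fst (receive j P c1) j = S j" using claim1[OF Mid2 jA] by simp
    have nR1: "\<not> card (S j - {j}) < card (P - {j})"
    proof
      assume h: "card (S j - {j}) < card (P - {j})"
      then have "fst (receive j P c1) j = P" using f1 unfolding receive_def Let_def by simp
      with f2 have "P = S j" by simp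
      with h show False by simp
    qed
    moreover have "card (P - {j}) = card (S j - {j}) \<and> P \<noteq> S j \<longrightarrow> (\<forall>k \<in> P - S j. \<exists>c'. Mid c' \<and> (k, S j) \<in># snd c')"
    proof (intro impI ballI)
      fix k assume h: "card (P - {j}) = card (S j - {j}) \<and> P \<noteq> S j" and k: "k \<in> P - S j"
      have "snd (receive j P c1) = snd c1 - {#(j,P)#} + image_mset (\<lambda>k. (k, fst c1 j)) (mset_set (P - fst c1 j))"
        using nR1 h f1 unfolding receive_def Let_def by simp
      moreover have "finite (P - S j)" using PA finA by (meson finite_Diff finite_subset)
      ultimately have "(k, S j) \<in># snd (receive j P c1)" using k f1 by auto
      then show "\<exists>c'. Mid c' \<and> (k, S j) \<in># snd c'" using Mid2 by blast
    qed
    ultimately show ?thesis by blast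
  qed
  have Mid0: "Mid c0" unfolding Mid_def using run by simp
  have xS: "\<And>x. x \<in> A \<Longrightarrow> x \<in> S x" using claim1[OF Mid0] by blast
  have finS: "\<And>x. finite (S x)" using Ssub finA finite_subset by blast
  have cpos: "\<And>x. x \<in> A \<Longrightarrow> card (S x) \<ge> 1"
    using xS finS by (metis One_nat_def Suc_leI card_gt_0_iff empty_iff)
  have fin0: "finite {(i, j). i \<in> A \<and> j \<in> neighbors A E i}"
    by (rule finite_subset[of _ "A \<times> A"]) (auto simp: neighbors_def finA)
  have msg0: "(j, S i) \<in># snd c0" if eij: "E i j" for i j
  proof -
    have "(i,j) \<in> {(i, j). i \<in> A \<and> j \<in> neighbors A E i}" using Es[OF eij] by (simp add: neighbors_def eij)
    then have "(j, pb1 i) \<in># initial_msgs A E pb1" unfolding initial_msgs_def using fin0 by force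
    moreover have "pb1 i = S i" using pb1x xS Es[OF eij] by auto
    ultimately show ?thesis unfolding c0_def by simp
  qed
  have edge1: "\<not> card (S j - {j}) < card (S i - {j})" if "E i j" for i j
    using claim2[OF Mid0 msg0[OF that]] by blast
  have ceq: "card (S i) = card (S j) \<and> j \<in> S i" if eij: "E i j" for i j
  proof -
    have iA: "i \<in> A" and jA: "j \<in> A" and eji: "E j i" using Es[OF eij] by auto
    have h1: "\<not> card (S j - {j}) < card (S i - {j})" using edge1[OF eij] .
    have h2: "\<not> card (S i - {i}) < card (S j - {i})" using edge1[OF eji] .
    show ?thesis using h1 h2 xS[OF iA] xS[OF jA] cpos[OF iA] cpos[OF jA] finS[of i] finS[of j]
      by (auto simp: card_Diff_singleton_if split: if_splits)
  qed
  obtain a where aA: "a \<in> A" using Ane by blast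
  have cconst: "card (S x) = card (S a)" if xA: "x \<in> A" for x
  proof -
    have "E\<^sup>*\<^sup>* a x" using conn aA xA by blast
    then show ?thesis
    proof (induction rule: rtranclp_induct)
      case base then show ?case by simp
    next
      case (step y z) then show ?case using ceq by metis
    qed
  qed
  have Seq: "S i = S j" if eij: "E i j" for i j
  proof (rule ccontr)
    assume ne: "S i \<noteq> S j"
    have iA: "i \<in> A" and jA: "j \<in> A" using Es[OF eij] by auto
    have cij: "card (S i) = card (S j)" and jSi: "j \<in> S i" using ceq[OF eij] by auto
    have "\<not> S i \<subseteq> S j"
    proof
      assume "S i \<subseteq> S j"
      then have "S i = S j" using cij finS card_subset_eq by blast
      with ne show False by simp
    qed
    then obtain k where k: "k \<in> S i - S j" by blast
    have kA: "k \<in> A" using k Ssub by blast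
    have "card (S i - {j}) = card (S j - {j})" using cij jSi xS[OF jA] finS by simp
    then obtain c' where c': "Mid c'" "(k, S j) \<in># snd c'"
      using claim2[OF Mid0 msg0[OF eij]] ne k by blast
    have h: "\<not> card (S k - {k}) < card (S j - {k})" using claim2[OF c'] by blast
    have "card (S k) = card (S j)" using cconst kA jA by metis
    then show False using h k xS[OF kA] cpos[OF kA] finS[of k] finS[of j]
      by (auto simp: card_Diff_singleton_if split: if_splits)
  qed
  have sconst: "S x = S a" if xA: "x \<in> A" for x
  proof -
    have "E\<^sup>*\<^sup>* a x" using conn aA xA by blast
    then show ?thesis
    proof (induction rule: rtranclp_induct)
      case base then show ?case by simp
    next
      case (step y z) then show ?case using Seq by metis
    qed
  qed
  have "A \<subseteq> S a" using sconst xS by blast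
  then have "card A \<le> card (S a)" using finS card_mono by blast
  then show False using DL[OF aA] by simp
qed

end
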